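(* Let $G$ be a 3-connected graph. If $G$ is 3-colourable, then the $G_3^0$-blocked graph of $G$ is the overlap graph of a family of subtrees of a tree with exactly 3 leaves.
   Context: Two sets $a,b$ overlap if $a\cap b\neq\emptyset$, $a\setminus b\neq\emptyset$, $b\setminus a\neq\emptyset$; the overlap graph of a family of subtrees (nonempty connected node sets) of a tree has one vertex per subtree, two being adjacent iff their subtrees overlap. $G_3^0$: vertices $v_s,v_b$ joined by 3 internally disjoint three-vertex paths $v_s-x_i-v_b$, no other edges. The $G_d^u$-blocked graph $G''$ of $G$ (here $d=3,u=0$): let $G'=(V',E')$ be the disjoint union of six copies of $G$. The vertex set of $G''$ is $V_1\cup V_2\cup V_3\cup V_4$ (pairwise disjoint), where $V_1=V'$ (vertex-representatives), $V_2$ contains one new vertex for each edge of $E'$ (edge-representatives), $V_3=\{f(v): v\in V_1\}$ is a set of new vertices in bijection $f$ with $V_1$ (brothers), and $V_4$ is the vertex set of a copy of $G_d^u$. Edges of $G''$: $v\in V_1$ is adjacent to the edge-representative of $e\in E'$ iff $v$ is an endpoint of $e$; $V_2\cup V_3$ is a clique; each $v\in V_1$ is adjacent to $f(v)$; every vertex of $V_2\cup V_3$ is adjacent to $v_s$ and $v_b$; the edges of $G_d^u$; no other edges. *)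

theory Defs
  imports Main
begin

definition graph :: "'a set \<Rightarrow> ('a \<Rightarrow> 'a \<Rightarrow> bool) \<Rightarrow> bool" where
  "graph V E \<longleftrightarrow> finite V \<and> (\<forall>u v. E u v \<longrightarrow> u \<in> V \<and> v \<in> V \<and> u \<noteq> v \<and> E v u)"

definition connected_on :: "('a \<Rightarrow> 'a \<Rightarrow> bool) \<Rightarrow> 'a set \<Rightarrow> bool" where
  "connected_on E S \<longleftrightarrow> S \<noteq> {} \<and>
     (\<forall>u\<in>S. \<forall>v\<in>S. (\<lambda>x y. x \<in> S \<and> y \<in> S \<and> E x y)\<^sup>*\<^sup>* u v)"

definition three_connected :: "'a set \<Rightarrow> ('a \<Rightarrow> 'a \<Rightarrow> bool) \<Rightarrow> bool" where
  "three_connected V E \<longleftrightarrow> card V > 3 \<and>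
     (\<forall>X. X \<subseteq> V \<and> card X < 3 \<longrightarrow> connected_on E (V - X))"

definition three_colourable :: "'a set \<Rightarrow> ('a \<Rightarrow> 'a \<Rightarrow> bool) \<Rightarrow> bool" where
  "three_colourable V E \<longleftrightarrow>
     (\<exists>c :: 'a \<Rightarrow> nat. (\<forall>v\<in>V. c v < 3) \<and> (\<forall>u\<in>V. \<forall>v\<in>V. E u v \<longrightarrow> c u \<noteq> c v))"

definition has_cycle :: "'b set \<Rightarrow> ('b \<Rightarrow> 'b \<Rightarrow> bool) \<Rightarrow> bool" where
  "has_cycle N E \<longleftrightarrow> (\<exists>cs. length cs \<ge> 3 \<and> distinct cs \<and> set cs \<subseteq> N \<and>
     (\<forall>i < length cs. E (cs ! i) (cs ! ((i + 1) mod length cs))))"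

definition tree :: "'b set \<Rightarrow> ('b \<Rightarrow> 'b \<Rightarrow> bool) \<Rightarrow> bool" where
  "tree N E \<longleftrightarrow> graph N E \<and> connected_on E N \<and> \<not> has_cycle N E"

definition leaves :: "'b set \<Rightarrow> ('b \<Rightarrow> 'b \<Rightarrow> bool) \<Rightarrow> 'b set" where
  "leaves N E = {v \<in> N. card {u \<in> N. E v u} = 1}"

definition subtree :: "'b set \<Rightarrow> ('b \<Rightarrow> 'b \<Rightarrow> bool) \<Rightarrow> 'b set \<Rightarrow> bool" where
  "subtree N E X \<longleftrightarrow> X \<subseteq> N \<and> connected_on E X"

definition overlap :: "'b set \<Rightarrow> 'b set \<Rightarrow> bool" where
  "overlap a b \<longleftrightarrow> a \<inter> b \<noteq> {} \<and> a - b \<noteq> {} \<and> b - a \<noteq> {}"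

text \<open>Vertices: VR i v (vertex-representative of v in copy i < 6),
ER i {u,v} (edge-representative of edge uv in copy i), Br i v (brother f(VR i v)),
and the vertices VS, VB, XP j (j < 3) of the copy of G_3^0.\<close>
datatype 'a bv = VR nat 'a | ER nat "'a set" | Br nat 'a | VS | VB | XP nat

definition bverts :: "'a set \<Rightarrow> ('a \<Rightarrow> 'a \<Rightarrow> bool) \<Rightarrow> 'a bv set" where
  "bverts V E =
     {VR i v | i v. i < 6 \<and> v \<in> V} \<union>
     {ER i {u, v} | i u v. i < 6 \<and> E u v} \<union>
     {Br i v | i v. i < 6 \<and> v \<in> V} \<union>
     {VS, VB} \<union> {XP j | j. j < 3}"

definition is_V23 :: "'a bv \<Rightarrow> bool" where
  "is_V23 x \<longleftrightarrow> (\<exists>i e. x = ER i e) \<or> (\<exists>i v. x = Br i v)"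

definition bbase :: "'a bv \<Rightarrow> 'a bv \<Rightarrow> bool" where
  "bbase x y \<longleftrightarrow>
     (\<exists>i v e. x = VR i v \<and> y = ER i e \<and> v \<in> e) \<or>
     (is_V23 x \<and> is_V23 y \<and> x \<noteq> y) \<or>
     (\<exists>i v. x = VR i v \<and> y = Br i v) \<or>
     (is_V23 x \<and> (y = VS \<or> y = VB)) \<or>
     (\<exists>j. x = VS \<and> y = XP j) \<or>
     (\<exists>j. x = XP j \<and> y = VB)"

definition badj :: "'a set \<Rightarrow> ('a \<Rightarrow> 'a \<Rightarrow> bool) \<Rightarrow> 'a bv \<Rightarrow> 'a bv \<Rightarrow> bool" where
  "badj V E x y \<longleftrightarrow> x \<in> bverts V E \<and> y \<in> bverts V E \<and> (bbase x y \<or> bbase y x)"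

end

theory Submission
  imports Defs
begin


definition TN :: "nat \<Rightarrow> nat set" where
  "TN L = {n. n = 0 \<or> (3 \<le> n \<and> n div 3 \<le> L)}"
definition TE :: "nat \<Rightarrow> nat \<Rightarrow> nat \<Rightarrow> bool" where
  "TE L x y \<longleftrightarrow> x \<in> TN L \<and> y \<in> TN L \<and>
     (y = x + 3 \<or> x = y + 3 \<or> (x = 0 \<and> 3 \<le> y \<and> y \<le> 5) \<or> (y = 0 \<and> 3 \<le> x \<and> x \<le> 5))"
definition par :: "nat \<Rightarrow> nat" where "par n = (if n \<le> 5 then 0 else n - 3)"

lemma TE_sym: "TE L x y \<Longrightarrow> TE L y x" unfolding TE_def by auto

lemma TE_depth: "TE L x y \<Longrightarrow> y div 3 = x div 3 + 1 \<or> x div 3 = y div 3 + 1"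
  unfolding TE_def TN_def by (elim conjE disjE) (simp_all, presburger+)

lemma TE_par: "TE L m n \<Longrightarrow> m div 3 < n div 3 \<Longrightarrow> m = par n"
  unfolding TE_def TN_def par_def by (elim conjE disjE) (simp_all, presburger+)

lemma graph_T: "graph (TN L) (TE L)"
proof -
  have "TN L \<subseteq> {..3*L+2}" unfolding TN_def by auto
  then have "finite (TN L)" using finite_subset by blast
  then show ?thesis unfolding graph_def TE_def by auto
qed

lemma idx_ne: fixes i l :: nat assumes "3 \<le> l" "i < l"
  shows "(if i = 0 then l - 1 else i - 1) \<noteq> (i + 1) mod l"
proof (cases "i + 1 = l")
  case True
  then have "(i+1) mod l = 0" by simp
  then show ?thesis using assms True by auto
next
  case False
  then have "(i+1) mod l = i + 1" using assms by simp
  then show ?thesis using assms by auto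
qed

lemma idx_succ: fixes i l :: nat assumes "0 < l" "i < l"
  shows "((if i = 0 then l - 1 else i - 1) + 1) mod l = i"
  using assms by auto

lemma no_cycle: "\<not> has_cycle (TN L) (TE L)"
proof
  assume "has_cycle (TN L) (TE L)"
  then obtain cs where len: "length cs \<ge> 3" and dist: "distinct cs" and sub: "set cs \<subseteq> TN L"
    and adj: "\<forall>i < length cs. TE L (cs ! i) (cs ! ((i + 1) mod length cs))"
    unfolding has_cycle_def by blast
  define l where "l = length cs"
  have "finite ((\<lambda>x. x div 3) ` set cs)" by simp
  moreover have "(\<lambda>x. x div 3) ` set cs \<noteq> {}" using len by auto
  ultimately have "Max ((\<lambda>x. x div 3) ` set cs) \<in> (\<lambda>x. x div 3) ` set cs" by (rule Max_in)
  then obtain x where x: "x \<in> set cs" "x div 3 = Max ((\<lambda>x. x div 3) ` set cs)" by auto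
  have mx: "\<And>y. y \<in> set cs \<Longrightarrow> y div 3 \<le> x div 3" using x by simp
  obtain i where i: "i < l" "cs ! i = x" using x(1) unfolding l_def by (metis in_set_conv_nth)
  define j where "j = (if i = 0 then l - 1 else i - 1)"
  have l0: "0 < l" "3 \<le> l" using len l_def by auto
  have j: "j < l" using l0 i j_def by auto
  have e1: "TE L x (cs ! ((i+1) mod l))" using adj i l_def by auto
  have e2: "TE L (cs ! j) x" using adj j idx_succ[OF l0(1) i(1)] i l_def j_def by metis
  have in1: "cs ! ((i+1) mod l) \<in> set cs" using l0 l_def by simp
  have in2: "cs ! j \<in> set cs" using j l_def by simp
  have d1: "(cs ! ((i+1) mod l)) div 3 < x div 3" using TE_depth[OF e1] mx[OF in1] by auto
  have d2: "(cs ! j) div 3 < x div 3" using TE_depth[OF e2] mx[OF in2] by auto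
  have "cs ! ((i+1) mod l) = par x" using TE_par[OF TE_sym[OF e1] d1] .
  moreover have "cs ! j = par x" using TE_par[OF e2 d2] .
  ultimately have eq: "cs ! j = cs ! ((i+1) mod l)" by simp
  have ne: "j \<noteq> (i+1) mod l" using idx_ne[OF l0(2) i(1)] j_def by simp
  have lt1: "(i+1) mod l < length cs" using l0 l_def by simp
  have lt2: "j < length cs" using j l_def by simp
  have "j = (i+1) mod l" using nth_eq_iff_index_eq[OF dist lt2 lt1] eq by simp
  then show False using ne by simp
qed




lemma conn_down:
  assumes X: "X \<subseteq> TN L" and r: "r \<in> X" and st: "\<forall>n\<in>X. n \<noteq> r \<longrightarrow> (\<exists>m\<in>X. TE L n m \<and> m < n)"
  shows "connected_on (TE L) X"
proof -
  define R where "R = (\<lambda>x y. x \<in> X \<and> y \<in> X \<and> TE L x y)"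
  have symR: "R\<inverse>\<inverse> = R" unfolding R_def by (auto intro!: ext intro: TE_sym)
  have down: "n \<in> X \<longrightarrow> R\<^sup>*\<^sup>* n r" for n
  proof (induction n rule: less_induct)
    case (less n)
    show ?case
    proof
      assume n: "n \<in> X"
      show "R\<^sup>*\<^sup>* n r"
      proof (cases "n = r")
        case True then show ?thesis by simp
      next
        case False
        then obtain m where m: "m \<in> X" "TE L n m" "m < n" using st n by blast
        then have "R n m" using n unfolding R_def by simp
        moreover have "R\<^sup>*\<^sup>* m r" using less m by blast
        ultimately show ?thesis by (rule converse_rtranclp_into_rtranclp)
      qed
    qed
  qed
  have up: "n \<in> X \<Longrightarrow> R\<^sup>*\<^sup>* r n" for n
  proof -
    assume "n \<in> X"
    then have "R\<^sup>*\<^sup>* n r" using down by blast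
    then have "(R\<inverse>\<inverse>)\<^sup>*\<^sup>* r n" by (rule rtranclp_converseI)
    then show ?thesis using symR by simp
  qed
  have "\<forall>u\<in>X. \<forall>v\<in>X. R\<^sup>*\<^sup>* u v" using down up by (meson rtranclp_trans)
  then show ?thesis using r unfolding connected_on_def R_def by auto
qed

definition star :: "nat \<Rightarrow> (nat \<Rightarrow> nat) \<Rightarrow> nat set" where
  "star L a = {n \<in> TN L. n div 3 \<le> a (n mod 3)}"
definition intv :: "nat \<Rightarrow> nat \<Rightarrow> nat \<Rightarrow> nat \<Rightarrow> nat set" where
  "intv L k p q = {n \<in> TN L. 3 \<le> n \<and> n mod 3 = k \<and> p \<le> n div 3 \<and> n div 3 \<le> q}"

lemma mod3_sub: "3 \<le> (n::nat) \<Longrightarrow> (n - 3) mod 3 = n mod 3 \<and> (n - 3) div 3 = n div 3 - 1"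
proof -
  assume "3 \<le> n"
  then obtain m where m: "n = m + 3" using le_Suc_ex[of 3 n] by (auto simp: add.commute)
  then show ?thesis by simp
qed

lemma par_facts: assumes "n \<in> TN L" "n \<noteq> 0"
  shows "par n \<in> TN L" "TE L n (par n)" "par n < n" "par n \<noteq> 0 \<Longrightarrow> par n mod 3 = n mod 3"
    "par n div 3 < n div 3"
proof -
  have n3: "3 \<le> n" "n div 3 \<le> L" using assms unfolding TN_def by auto
  have "par n \<in> TN L \<and> TE L n (par n) \<and> par n < n \<and> (par n \<noteq> 0 \<longrightarrow> par n mod 3 = n mod 3) \<and> par n div 3 < n div 3"
  proof (cases "n \<le> 5")
    case True
    then show ?thesis using n3 assms unfolding par_def TE_def TN_def by auto
  next
    case False
    then obtain m where m: "n = m + 3" "3 \<le> m" using le_Suc_ex[of 6 n] by (auto simp: add.commute)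
    have "par n = m" using m unfolding par_def by simp
    moreover have "m \<in> TN L" using m n3 unfolding TN_def by simp
    ultimately show ?thesis using m assms unfolding TE_def by simp
  qed
  then show "par n \<in> TN L" "TE L n (par n)" "par n < n" "par n \<noteq> 0 \<Longrightarrow> par n mod 3 = n mod 3"
    "par n div 3 < n div 3" by auto
qed

lemma star_conn: "connected_on (TE L) (star L a)"
proof (rule conn_down[where r = 0])
  show "star L a \<subseteq> TN L" unfolding star_def by auto
  show "0 \<in> star L a" unfolding star_def TN_def by auto
  show "\<forall>n\<in>star L a. n \<noteq> 0 \<longrightarrow> (\<exists>m\<in>star L a. TE L n m \<and> m < n)"
  proof (intro ballI impI)
    fix n assume n: "n \<in> star L a" "n \<noteq> 0"
    have nT: "n \<in> TN L" and nd: "n div 3 \<le> a (n mod 3)" using n unfolding star_def by auto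
    note pf = par_facts[OF nT n(2)]
    have "par n \<in> star L a"
    proof (cases "par n = 0")
      case True then show ?thesis using pf unfolding star_def by auto
    next
      case False then show ?thesis using pf nd unfolding star_def by auto
    qed
    then show "\<exists>m\<in>star L a. TE L n m \<and> m < n" using pf by blast
  qed
qed

lemma intv_conn: assumes "1 \<le> p" "p \<le> q" "q \<le> L" "k < 3"
  shows "connected_on (TE L) (intv L k p q)"
proof (rule conn_down[where r = "3*p+k"])
  show "intv L k p q \<subseteq> TN L" unfolding intv_def by auto
  show "3*p+k \<in> intv L k p q" using assms unfolding intv_def TN_def by auto
  show "\<forall>n\<in>intv L k p q. n \<noteq> 3*p+k \<longrightarrow> (\<exists>m\<in>intv L k p q. TE L n m \<and> m < n)"
  proof (intro ballI impI)
    fix n assume n: "n \<in> intv L k p q" "n \<noteq> 3*p+k"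
    have nn: "n = 3 * (n div 3) + n mod 3" by simp
    have h: "n \<in> TN L" "3 \<le> n" "n mod 3 = k" "p \<le> n div 3" "n div 3 \<le> q" using n unfolding intv_def by auto
    have "n div 3 \<noteq> p" using nn h n(2) by metis
    then have gt: "p < n div 3" using h by simp
    then have "6 \<le> n" using assms by auto
    then obtain m where m: "n = m + 3" "3 \<le> m" using le_Suc_ex[of 6 n] by (auto simp: add.commute)
    have "m \<in> intv L k p q" using h gt m unfolding intv_def TN_def by auto
    moreover have "TE L n m" using h m \<open>m \<in> intv L k p q\<close> unfolding intv_def TE_def by auto
    ultimately show "\<exists>m\<in>intv L k p q. TE L n m \<and> m < n" using m by force
  qed
qed

lemma tree_T: "tree (TN L) (TE L)"
proof -
  have "star L (\<lambda>_. L) = TN L" unfolding star_def TN_def by auto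
  then show ?thesis unfolding tree_def using graph_T no_cycle star_conn[of L "\<lambda>_. L"] by simp
qed

lemma nbrs0: assumes "1 \<le> L" shows "{u\<in>TN L. TE L 0 u} = {3,4,5}"
  using assms unfolding TN_def TE_def by auto

lemma nbrs: assumes "n \<in> TN L" "n \<noteq> 0"
  shows "{u \<in> TN L. TE L n u} = {par n} \<union> (if n div 3 < L then {n+3} else {})"
  using assms unfolding TN_def TE_def par_def by auto

lemma leaves_T: assumes "2 \<le> L" shows "card (leaves (TN L) (TE L)) = 3"
proof -
  have "leaves (TN L) (TE L) = {3*L, 3*L+1, 3*L+2}"
  proof (rule set_eqI)
    fix n
    show "n \<in> leaves (TN L) (TE L) \<longleftrightarrow> n \<in> {3*L, 3*L+1, 3*L+2}"
    proof (cases "n \<in> TN L \<and> n \<noteq> 0")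
      case True
      have "par n \<noteq> n + 3" using par_facts(3)[of n L] True by simp
      then have c: "card {u \<in> TN L. TE L n u} = (if n div 3 < L then 2 else 1)"
        using nbrs[of n L] True by simp
      have "n \<in> {3*L, 3*L+1, 3*L+2} \<longleftrightarrow> \<not> n div 3 < L" using True unfolding TN_def by auto
      then show ?thesis using c True unfolding leaves_def by auto
    next
      case False
      show ?thesis
      proof (cases "n \<in> TN L")
        case False then show ?thesis using assms unfolding leaves_def TN_def by auto
      next
        case True
        then have "n = 0" using False by simp
        then show ?thesis using nbrs0[of L] assms unfolding leaves_def TN_def by auto
      qed
    qed
  qed
  then show ?thesis by simp
qed




lemma overlap_sym: "overlap A B \<longleftrightarrow> overlap B A" unfolding overlap_def by blast

lemma star_diff: assumes "\<forall>k<3. a k \<le> L"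
  shows "star L a - star L b \<noteq> {} \<longleftrightarrow> (\<exists>k<3. b k < a k)"
proof
  assume "star L a - star L b \<noteq> {}"
  then obtain n where n: "n \<in> star L a" "n \<notin> star L b" by auto
  have "n mod 3 < 3" by simp
  moreover have "b (n mod 3) < a (n mod 3)" using n unfolding star_def by auto
  ultimately show "\<exists>k<3. b k < a k" by blast
next
  assume "\<exists>k<3. b k < a k"
  then obtain k where k: "k < 3" "b k < a k" by blast
  define n where "n = 3 * a k + k"
  have nd: "n div 3 = a k" "n mod 3 = k" using k n_def by auto
  have "n \<in> TN L" using k assms nd unfolding TN_def n_def by auto
  then have "n \<in> star L a" "n \<notin> star L b" using nd k unfolding star_def by auto
  then show "star L a - star L b \<noteq> {}" by blast
qed

lemma zero_star: "0 \<in> star L a" unfolding star_def TN_def by simp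

lemma star_overlap: assumes "\<forall>k<3. a k \<le> L" "\<forall>k<3. b k \<le> L"
  shows "overlap (star L a) (star L b) \<longleftrightarrow> (\<exists>k<3. a k < b k) \<and> (\<exists>k<3. b k < a k)"
  unfolding overlap_def using star_diff[OF assms(1), of b] star_diff[OF assms(2), of a]
    zero_star[of L a] zero_star[of L b] by blast

lemma star_intv_overlap: assumes "1 \<le> p" "p \<le> q" "q \<le> L" "k < 3"
  shows "overlap (star L a) (intv L k p q) \<longleftrightarrow> p \<le> a k \<and> a k < q"
proof -
  have z: "0 \<in> star L a - intv L k p q" using zero_star[of L a] unfolding intv_def by auto
  have "star L a \<inter> intv L k p q \<noteq> {} \<longleftrightarrow> p \<le> a k"
  proof
    assume "star L a \<inter> intv L k p q \<noteq> {}"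
    then obtain n where "n \<in> star L a" "n \<in> intv L k p q" by auto
    then show "p \<le> a k" unfolding star_def intv_def by auto
  next
    assume pa: "p \<le> a k"
    define n where "n = 3 * p + k"
    have nd: "n div 3 = p" "n mod 3 = k" using assms n_def by auto
    have "n \<in> TN L" "3 \<le> n" using assms nd unfolding TN_def n_def by auto
    then have "n \<in> star L a" "n \<in> intv L k p q" using nd pa assms unfolding star_def intv_def by auto
    then show "star L a \<inter> intv L k p q \<noteq> {}" by blast
  qed
  moreover have "intv L k p q - star L a \<noteq> {} \<longleftrightarrow> a k < q"
  proof
    assume "intv L k p q - star L a \<noteq> {}"
    then obtain n where "n \<in> intv L k p q" "n \<notin> star L a" by auto
    then show "a k < q" unfolding star_def intv_def by auto
  next
    assume pa: "a k < q"
    define n where "n = 3 * q + k"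
    have nd: "n div 3 = q" "n mod 3 = k" using assms n_def by auto
    have "n \<in> TN L" "3 \<le> n" using assms nd unfolding TN_def n_def by auto
    then have "n \<notin> star L a" "n \<in> intv L k p q" using nd pa assms unfolding star_def intv_def by auto
    then show "intv L k p q - star L a \<noteq> {}" by blast
  qed
  ultimately show ?thesis using z unfolding overlap_def by blast
qed

lemma intv_disj: assumes "k \<noteq> k' \<or> q < p' \<or> q' < p"
  shows "\<not> overlap (intv L k p q) (intv L k' p' q')"
  using assms unfolding overlap_def intv_def by auto

lemma intv_sub: assumes "p' \<le> p" "q \<le> q'"
  shows "\<not> overlap (intv L k p q) (intv L k p' q')"
  using assms unfolding overlap_def intv_def by auto




locale LC =
  fixes V :: "'a set" and E :: "'a \<Rightarrow> 'a \<Rightarrow> bool" and c :: "'a \<Rightarrow> nat" and g :: "'a \<Rightarrow> nat"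
  assumes gr: "graph V E" and col: "\<forall>v\<in>V. c v < 3"
    and colE: "\<forall>u\<in>V. \<forall>v\<in>V. E u v \<longrightarrow> c u \<noteq> c v"
    and ginj: "inj_on g V" and gb: "\<forall>v\<in>V. g v < card V"
begin

abbreviation "nn \<equiv> card V"
definition "mid i v = 2 * (6 * g v + i) + 2"
definition "BB = 12 * nn + 1"
definition "CC = 36 * nn + 3"
definition "LL = CC + 1"

definition erv :: "nat \<Rightarrow> 'a set \<Rightarrow> nat \<Rightarrow> nat" where
  "erv i e k = (if \<exists>w\<in>e. c w = k then (\<Sum>w\<in>{w\<in>e. c w = k}. mid i w) else CC - (\<Sum>w\<in>e. mid i w))"
definition brv :: "nat \<Rightarrow> 'a \<Rightarrow> nat \<Rightarrow> nat" where
  "brv i v k = (if k = c v then mid i v else if k = (c v + 1) mod 3 then BB else CC - mid i v - BB)"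
definition xpv :: "nat \<Rightarrow> nat \<Rightarrow> nat" where
  "xpv j k = (if j = 0 then (if k = 2 then 0 else 1) else if j = 1 then 1 else CC)"

definition vec :: "'a bv \<Rightarrow> nat \<Rightarrow> nat" where
  "vec x = (case x of ER i e \<Rightarrow> erv i e | Br i v \<Rightarrow> brv i v | XP j \<Rightarrow> xpv j | _ \<Rightarrow> (\<lambda>_. 0))"

definition SS :: "'a bv \<Rightarrow> nat set" where
  "SS x = (case x of VR i v \<Rightarrow> intv LL (c v) (mid i v) (mid i v + 1)
     | VS \<Rightarrow> intv LL 0 1 LL | VB \<Rightarrow> intv LL 1 1 LL | _ \<Rightarrow> star LL (vec x))"

lemma mid_bound: "v \<in> V \<Longrightarrow> i < 6 \<Longrightarrow> 2 \<le> mid i v \<and> mid i v \<le> 12 * nn"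
proof -
  assume "v \<in> V" "i < 6"
  then have "g v + 1 \<le> nn" using gb by auto
  then have "6 * g v + i + 1 \<le> 6 * nn" using \<open>i < 6\<close> by linarith
  then show ?thesis unfolding mid_def by (simp add: algebra_simps)
qed

lemma mid_inj: "v \<in> V \<Longrightarrow> w \<in> V \<Longrightarrow> i < 6 \<Longrightarrow> j < 6 \<Longrightarrow> mid i v = mid j w \<Longrightarrow> i = j \<and> v = w"
proof -
  assume a: "v \<in> V" "w \<in> V" "i < 6" "j < 6" "mid i v = mid j w"
  then have h: "6 * g v + i = 6 * g w + j" unfolding mid_def by simp
  then have "i = j" using a by presburger
  then have "g v = g w" using h by simp
  then show ?thesis using ginj a \<open>i = j\<close> unfolding inj_on_def by blast
qed

lemma erv_eq: assumes "u \<in> V" "v \<in> V" "c u \<noteq> c v"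
  shows "erv i {u,v} k = (if k = c u then mid i u else if k = c v then mid i v else CC - mid i u - mid i v)"
proof -
  have uv: "u \<noteq> v" using assms by auto
  show ?thesis
  proof (cases "k = c u")
    case True
    then have "{w\<in>{u,v}. c w = k} = {u}" using assms by auto
    then show ?thesis using True unfolding erv_def by auto
  next
    case F: False
    show ?thesis
    proof (cases "k = c v")
      case True
      then have "{w\<in>{u,v}. c w = k} = {v}" using assms by auto
      then show ?thesis using True F unfolding erv_def by auto
    next
      case False
      then show ?thesis using F uv unfolding erv_def by auto
    qed
  qed
qed

lemma VR_mem: "VR i v \<in> bverts V E \<Longrightarrow> i < 6 \<and> v \<in> V" unfolding bverts_def by auto
lemma Br_mem: "Br i v \<in> bverts V E \<Longrightarrow> i < 6 \<and> v \<in> V" unfolding bverts_def by auto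
lemma XP_mem: "XP j \<in> bverts V E \<Longrightarrow> j < 3" unfolding bverts_def by auto
lemma ER_mem: "ER i e \<in> bverts V E \<Longrightarrow> i < 6 \<and> (\<exists>u v. e = {u,v} \<and> E u v \<and> u \<in> V \<and> v \<in> V \<and> c u \<noteq> c v)"
proof -
  assume "ER i e \<in> bverts V E"
  then obtain u v where "i < 6" "e = {u,v}" "E u v" unfolding bverts_def by auto
  moreover have "u \<in> V" "v \<in> V" using gr \<open>E u v\<close> unfolding graph_def by auto
  moreover have "c u \<noteq> c v" using colE calculation by blast
  ultimately show ?thesis by blast
qed

lemma c3: "v \<in> V \<Longrightarrow> c v = 0 \<or> c v = 1 \<or> c v = 2" using col by fastforce

lemma er_bounds: assumes "u \<in> V" "v \<in> V" "c u \<noteq> c v" "i < 6"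
  shows "(\<forall>k<3. 1 \<le> erv i {u,v} k \<and> erv i {u,v} k \<le> CC) \<and> erv i {u,v} 0 + erv i {u,v} 1 + erv i {u,v} 2 = CC"
proof -
  have a: "2 \<le> mid i u" "mid i u \<le> 12 * nn" "2 \<le> mid i v" "mid i v \<le> 12 * nn"
    using mid_bound assms by auto
  have e: "\<And>k. erv i {u,v} k = (if k = c u then mid i u else if k = c v then mid i v else CC - mid i u - mid i v)"
    using erv_eq assms by blast
  have le: "mid i u + mid i v + 12 * nn + 3 \<le> CC" using a unfolding CC_def by linarith
  have vals: "\<And>k. erv i {u,v} k = mid i u \<or> erv i {u,v} k = mid i v \<or> erv i {u,v} k = CC - mid i u - mid i v"
    using e by simp
  have b1: "\<forall>k<3. 1 \<le> erv i {u,v} k \<and> erv i {u,v} k \<le> CC"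
  proof (intro allI impI)
    fix k :: nat
    show "1 \<le> erv i {u,v} k \<and> erv i {u,v} k \<le> CC" using vals[of k] a le by auto
  qed
  have "erv i {u,v} 0 + erv i {u,v} 1 + erv i {u,v} 2 = CC"
    using c3[OF assms(1)] c3[OF assms(2)] assms(3) le by (elim disjE) (simp_all add: e)
  then show ?thesis using b1 by blast
qed

lemma br_bounds: assumes "v \<in> V" "i < 6"
  shows "(\<forall>k<3. 1 \<le> brv i v k \<and> brv i v k \<le> CC) \<and> brv i v 0 + brv i v 1 + brv i v 2 = CC"
proof -
  have a: "2 \<le> mid i v" "mid i v \<le> 12 * nn"
    using mid_bound assms by auto
  have le: "mid i v + BB + 12 * nn + 2 \<le> CC" using a unfolding CC_def BB_def by linarith
  have vals: "\<And>k. brv i v k = mid i v \<or> brv i v k = BB \<or> brv i v k = CC - mid i v - BB"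
    unfolding brv_def by simp
  have b1: "\<forall>k<3. 1 \<le> brv i v k \<and> brv i v k \<le> CC"
  proof (intro allI impI)
    fix k :: nat
    show "1 \<le> brv i v k \<and> brv i v k \<le> CC" using vals[of k] a le unfolding BB_def by auto
  qed
  have "brv i v 0 + brv i v 1 + brv i v 2 = CC"
    using c3[OF assms(1)] le by (elim disjE) (simp_all add: brv_def)
  then show ?thesis using b1 by blast
qed

lemma v23_bounds: assumes "x \<in> bverts V E" "is_V23 x"
  shows "(\<forall>k<3. 1 \<le> vec x k \<and> vec x k \<le> CC) \<and> vec x 0 + vec x 1 + vec x 2 = CC"
proof -
  from assms(2) consider (er) i e where "x = ER i e" | (br) i v where "x = Br i v" unfolding is_V23_def by blast
  then show ?thesis
  proof cases
    case er
    then obtain u v where "i < 6" "e = {u,v}" "u \<in> V" "v \<in> V" "c u \<noteq> c v" using ER_mem assms(1) by blast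
    then show ?thesis using er er_bounds unfolding vec_def by simp
  next
    case br
    then show ?thesis using Br_mem assms(1) br_bounds unfolding vec_def by simp
  qed
qed

lemma vr_er: assumes "v \<in> V" "i < 6" "u \<in> V" "w \<in> V" "c u \<noteq> c w" "j < 6"
  shows "erv j {u,w} (c v) = mid i v \<longleftrightarrow> i = j \<and> v \<in> {u,w}"
proof -
  have a: "2 \<le> mid j u" "mid j u \<le> 12 * nn" "2 \<le> mid j w" "mid j w \<le> 12 * nn" "mid i v \<le> 12 * nn"
    using mid_bound assms by auto
  have e: "erv j {u,w} (c v) = (if c v = c u then mid j u else if c v = c w then mid j w else CC - mid j u - mid j w)"
    using erv_eq assms by blast
  show ?thesis
  proof (cases "c v = c u")
    case True
    then show ?thesis using e mid_inj[of u v j i] assms by auto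
  next
    case F: False
    show ?thesis
    proof (cases "c v = c w")
      case True
      then show ?thesis using e F mid_inj[of w v j i] assms by auto
    next
      case False
      have "erv j {u,w} (c v) > 12 * nn" using e F False a unfolding CC_def by auto
      then show ?thesis using F False a by auto
    qed
  qed
qed

lemma vr_br: assumes "v \<in> V" "i < 6" "w \<in> V" "j < 6"
  shows "brv j w (c v) = mid i v \<longleftrightarrow> i = j \<and> v = w"
proof (cases "c v = c w")
  case True
  then show ?thesis using mid_inj[of w v j i] assms unfolding brv_def by auto
next
  case False
  have a: "2 \<le> mid j w" "mid j w \<le> 12 * nn" "mid i v \<le> 12 * nn" using mid_bound assms by auto
  have "brv j w (c v) > 12 * nn" using False a unfolding brv_def BB_def CC_def by auto
  then show ?thesis using False a by auto
qed

lemma vr_v23: assumes "v \<in> V" "i < 6" "x \<in> bverts V E" "is_V23 x"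
  shows "vec x (c v) = mid i v \<longleftrightarrow> bbase (VR i v) x"
proof -
  from assms(4) consider (er) j e where "x = ER j e" | (br) j w where "x = Br j w" unfolding is_V23_def by blast
  then show ?thesis
  proof cases
    case er
    then obtain u w where "j < 6" "e = {u,w}" "u \<in> V" "w \<in> V" "c u \<noteq> c w" using ER_mem assms(3) by blast
    then show ?thesis using er vr_er[of v i u w j] assms unfolding vec_def bbase_def is_V23_def by auto
  next
    case br
    then have "j < 6" "w \<in> V" using Br_mem assms(3) by auto
    then show ?thesis using br vr_br[of v i w j] assms unfolding vec_def bbase_def is_V23_def by auto
  qed
qed

end



context LC begin

lemma bb_vr_er: "bbase (VR i v) (ER j e) \<longleftrightarrow> i = j \<and> v \<in> e" by (auto simp: bbase_def is_V23_def)
lemma bb_vr_br: "bbase (VR i v) (Br j w) \<longleftrightarrow> i = j \<and> v = w" by (auto simp: bbase_def is_V23_def)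

lemma v23_cases: assumes "x \<in> bverts V E" "is_V23 x"
  obtains (er) i u w where "x = ER i {u,w}" "i < 6" "u \<in> V" "w \<in> V" "c u \<noteq> c w"
  | (br) i v where "x = Br i v" "i < 6" "v \<in> V"
proof -
  from assms(2) consider (er) i e where "x = ER i e" | (br) i v where "x = Br i v" unfolding is_V23_def by blast
  then show ?thesis
  proof cases
    case er
    then show ?thesis using ER_mem assms(1) that(1) by blast
  next
    case br
    then show ?thesis using Br_mem assms(1) that(2) by blast
  qed
qed

lemma v23_inj: assumes "x \<in> bverts V E" "is_V23 x" "y \<in> bverts V E" "is_V23 y"
  and eq: "\<forall>k<3. vec x k = vec y k"
  shows "x = y"
proof -
  have same: "bbase (VR i v) x \<longleftrightarrow> bbase (VR i v) y" if "v \<in> V" "i < 6" for i v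
  proof -
    have "c v < 3" using col that by auto
    then show ?thesis using vr_v23[OF that assms(1,2)] vr_v23[OF that assms(3,4)] eq by auto
  qed
  show ?thesis
  proof (cases rule: v23_cases[OF assms(1,2), case_names er br])
    case (er i u w)
    note x = this
    show ?thesis
    proof (cases rule: v23_cases[OF assms(3,4), case_names er br])
      case (er j u' w')
      have "i = j \<and> u \<in> {u',w'}" using same[of u i] x er by (simp add: bb_vr_er)
      moreover have "i = j \<and> w \<in> {u',w'}" using same[of w i] x er by (simp add: bb_vr_er)
      moreover have "u' \<in> {u,w}" using same[of u' j] x er by (simp add: bb_vr_er)
      moreover have "w' \<in> {u,w}" using same[of w' j] x er by (simp add: bb_vr_er)
      ultimately show ?thesis using x er by auto
    next
      case (br j v)
      have "u = v" using same[of u i] x br by (simp add: bb_vr_er bb_vr_br)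
      moreover have "w = v" using same[of w i] x br by (simp add: bb_vr_er bb_vr_br)
      ultimately show ?thesis using x by simp
    qed
  next
    case (br i v)
    note x = this
    show ?thesis
    proof (cases rule: v23_cases[OF assms(3,4), case_names er br])
      case (er j u w)
      have "u = v" using same[of u j] x er by (simp add: bb_vr_er bb_vr_br)
      moreover have "w = v" using same[of w j] x er by (simp add: bb_vr_er bb_vr_br)
      ultimately show ?thesis using er by simp
    next
      case (br j w)
      have "i = j \<and> v = w" using same[of v i] x br by (simp add: bb_vr_br)
      then show ?thesis using x br by simp
    qed
  qed
qed

lemma CC_LL: "CC < LL" unfolding LL_def by simp

lemma vec_le: assumes "x \<in> bverts V E" "is_V23 x \<or> (\<exists>j. x = XP j)" shows "\<forall>k<3. vec x k \<le> LL"
proof (cases "is_V23 x")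
  case True then show ?thesis using v23_bounds[OF assms(1) True] CC_LL by force
next
  case False
  then obtain j where "x = XP j" using assms by blast
  then show ?thesis using CC_LL unfolding vec_def xpv_def by auto
qed

lemma SS_star: "is_V23 x \<or> (\<exists>j. x = XP j) \<Longrightarrow> SS x = star LL (vec x)"
  unfolding is_V23_def SS_def by auto

lemma vr_star: assumes "v \<in> V" "i < 6" "\<forall>k<3. a k \<le> LL"
  shows "overlap (intv LL (c v) (mid i v) (mid i v + 1)) (star LL a) \<longleftrightarrow> a (c v) = mid i v"
proof -
  have m: "2 \<le> mid i v" "mid i v \<le> 12 * nn" using mid_bound assms by auto
  have "mid i v + 1 \<le> LL" using m unfolding LL_def CC_def by simp
  moreover have "c v < 3" using col assms by auto
  ultimately have "overlap (star LL a) (intv LL (c v) (mid i v) (mid i v + 1)) \<longleftrightarrow> mid i v \<le> a (c v) \<and> a (c v) < mid i v + 1"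
    using star_intv_overlap m by simp
  then show ?thesis using overlap_sym by auto
qed

end



context LC begin

abbreviation "AA x y \<equiv> bbase x y \<or> bbase y x"

lemma mid_bd: "v \<in> V \<Longrightarrow> i < 6 \<Longrightarrow> 2 \<le> mid i v \<and> mid i v + 1 \<le> LL \<and> mid i v < CC"
  using mid_bound unfolding LL_def CC_def by fastforce

lemma c_vr_vr: assumes "v \<in> V" "i < 6" "w \<in> V" "j < 6" "VR i v \<noteq> VR j w"
  shows "AA (VR i v) (VR j w) \<longleftrightarrow> overlap (SS (VR i v)) (SS (VR j w))"
proof -
  have "mid i v \<noteq> mid j w" using mid_inj[of v w i j] assms by auto
  then have "mid i v + 1 < mid j w \<or> mid j w + 1 < mid i v" unfolding mid_def by presburger
  then have "\<not> overlap (SS (VR i v)) (SS (VR j w))" unfolding SS_def using intv_disj by auto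
  moreover have "\<not> AA (VR i v) (VR j w)" by (auto simp: bbase_def is_V23_def)
  ultimately show ?thesis by blast
qed

lemma c_vr_v23: assumes "v \<in> V" "i < 6" "y \<in> bverts V E" "is_V23 y"
  shows "AA (VR i v) y \<longleftrightarrow> overlap (SS (VR i v)) (SS y)"
proof -
  have "\<not> bbase y (VR i v)" using assms(4) by (auto simp: bbase_def is_V23_def)
  then have "AA (VR i v) y \<longleftrightarrow> vec y (c v) = mid i v" using vr_v23[OF assms] by blast
  also have "\<dots> \<longleftrightarrow> overlap (SS (VR i v)) (SS y)"
    using vr_star[OF assms(1,2) vec_le[OF assms(3)]] assms(4) SS_star[of y] by (simp add: SS_def)
  finally show ?thesis .
qed

lemma c_vr_VS: assumes "v \<in> V" "i < 6"
  shows "AA (VR i v) VS \<longleftrightarrow> overlap (SS (VR i v)) (SS VS)"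
proof -
  have m: "2 \<le> mid i v" "mid i v + 1 \<le> LL" using mid_bd assms by auto
  have "\<not> overlap (intv LL (c v) (mid i v) (mid i v + 1)) (intv LL 0 1 LL)"
  proof (cases "c v = 0")
    case True then show ?thesis using intv_sub[of 1 "mid i v" "mid i v + 1" LL LL 0] m by simp
  next
    case False then show ?thesis using intv_disj by simp
  qed
  moreover have "\<not> AA (VR i v) VS" by (auto simp: bbase_def is_V23_def)
  ultimately show ?thesis by (simp add: SS_def)
qed

lemma c_vr_VB: assumes "v \<in> V" "i < 6"
  shows "AA (VR i v) VB \<longleftrightarrow> overlap (SS (VR i v)) (SS VB)"
proof -
  have m: "2 \<le> mid i v" "mid i v + 1 \<le> LL" using mid_bd assms by auto
  have "\<not> overlap (intv LL (c v) (mid i v) (mid i v + 1)) (intv LL 1 1 LL)"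
  proof (cases "c v = 1")
    case True then show ?thesis using intv_sub[of 1 "mid i v" "mid i v + 1" LL LL 1] m by simp
  next
    case False then show ?thesis using intv_disj by simp
  qed
  moreover have "\<not> AA (VR i v) VB" by (auto simp: bbase_def is_V23_def)
  ultimately show ?thesis by (simp add: SS_def)
qed

lemma c_vr_XP: assumes "v \<in> V" "i < 6" "XP j \<in> bverts V E"
  shows "AA (VR i v) (XP j) \<longleftrightarrow> overlap (SS (VR i v)) (SS (XP j))"
proof -
  have m: "2 \<le> mid i v" "mid i v < CC" using mid_bd assms by auto
  have "xpv j (c v) \<noteq> mid i v" using m unfolding xpv_def by auto
  then have "\<not> overlap (SS (VR i v)) (SS (XP j))"
    using vr_star[OF assms(1,2) vec_le[OF assms(3)]] SS_star[of "XP j"] by (simp add: SS_def vec_def)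
  moreover have "\<not> AA (VR i v) (XP j)" by (auto simp: bbase_def is_V23_def)
  ultimately show ?thesis by blast
qed

lemma sum_eq_le: fixes a b :: "nat \<Rightarrow> nat"
  assumes "\<forall>k<3. a k \<le> b k" "a 0 + a 1 + a 2 = b 0 + b 1 + b 2" shows "\<forall>k<3. a k = b k"
proof -
  have "a 0 \<le> b 0" "a 1 \<le> b 1" "a 2 \<le> b 2" using assms(1) by auto
  then have "a 0 = b 0" "a 1 = b 1" "a 2 = b 2" using assms(2) by linarith+
  show ?thesis
  proof (intro allI impI)
    fix k :: nat assume "k < 3"
    then have "k = 0 \<or> k = 1 \<or> k = 2" by auto
    then show "a k = b k" using \<open>a 0 = b 0\<close> \<open>a 1 = b 1\<close> \<open>a 2 = b 2\<close> by auto
  qed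
qed

lemma c_v23_v23: assumes "x \<in> bverts V E" "is_V23 x" "y \<in> bverts V E" "is_V23 y" "x \<noteq> y"
  shows "AA x y \<longleftrightarrow> overlap (SS x) (SS y)"
proof -
  have A: "AA x y" using assms by (auto simp: bbase_def)
  have bx: "vec x 0 + vec x 1 + vec x 2 = CC" using v23_bounds[OF assms(1,2)] by blast
  have by': "vec y 0 + vec y 1 + vec y 2 = CC" using v23_bounds[OF assms(3,4)] by blast
  have "\<exists>k<3. vec x k < vec y k"
  proof (rule ccontr)
    assume "\<not> (\<exists>k<3. vec x k < vec y k)"
    then have "\<forall>k<3. vec y k \<le> vec x k" by auto
    then have "\<forall>k<3. vec y k = vec x k" using sum_eq_le bx by' by simp
    then have "y = x" using v23_inj assms by blast
    then show False using assms by simp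
  qed
  moreover have "\<exists>k<3. vec y k < vec x k"
  proof (rule ccontr)
    assume "\<not> (\<exists>k<3. vec y k < vec x k)"
    then have "\<forall>k<3. vec x k \<le> vec y k" by auto
    then have "\<forall>k<3. vec x k = vec y k" using sum_eq_le bx by' by simp
    then have "x = y" using v23_inj assms by blast
    then show False using assms by simp
  qed
  ultimately have "overlap (SS x) (SS y)"
    using star_overlap[OF vec_le[OF assms(1)] vec_le[OF assms(3)]] SS_star assms by auto
  then show ?thesis using A by blast
qed

lemma c_v23_VSB: assumes "x \<in> bverts V E" "is_V23 x" "k < 2"
  shows "overlap (SS x) (intv LL k 1 LL)"
proof -
  have "1 \<le> vec x k" "vec x k \<le> CC" using v23_bounds[OF assms(1,2)] assms(3) by auto
  then show ?thesis using star_intv_overlap[of 1 LL LL k "vec x"] SS_star[of x] assms CC_LL by auto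
qed

lemma c_v23_VS: assumes "x \<in> bverts V E" "is_V23 x"
  shows "AA x VS \<longleftrightarrow> overlap (SS x) (SS VS)"
  using c_v23_VSB[OF assms, of 0] assms(2) by (auto simp: bbase_def SS_def)

lemma c_v23_VB: assumes "x \<in> bverts V E" "is_V23 x"
  shows "AA x VB \<longleftrightarrow> overlap (SS x) (SS VB)"
  using c_v23_VSB[OF assms, of 1] assms(2) by (auto simp: bbase_def SS_def)

lemma c_v23_XP: assumes "x \<in> bverts V E" "is_V23 x" "XP j \<in> bverts V E"
  shows "AA x (XP j) \<longleftrightarrow> overlap (SS x) (SS (XP j))"
proof -
  have j: "j < 3" using XP_mem assms(3) by simp
  have b: "\<forall>k<3. 1 \<le> vec x k \<and> vec x k \<le> CC" using v23_bounds[OF assms(1,2)] by blast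
  have "(\<forall>k<3. xpv j k \<le> vec x k) \<or> (\<forall>k<3. vec x k \<le> xpv j k)"
  proof (cases "j = 2")
    case True then show ?thesis using b j unfolding xpv_def by auto
  next
    case False then show ?thesis using b j unfolding xpv_def by auto
  qed
  then have "\<not> overlap (SS x) (SS (XP j))"
    using star_overlap[OF vec_le[OF assms(1)] vec_le[OF assms(3)]] SS_star[of x] SS_star[of "XP j"] assms(2)
    by (auto simp: vec_def not_less[symmetric])
  moreover have "\<not> AA x (XP j)" using assms(2) by (auto simp: bbase_def is_V23_def)
  ultimately show ?thesis by blast
qed

lemma c_VS_VB: "AA VS VB \<longleftrightarrow> overlap (SS VS) (SS VB)"
  using intv_disj[of 0 1] by (auto simp: bbase_def is_V23_def SS_def)

lemma c_VSB_XP: assumes "XP j \<in> bverts V E" "k < 2"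
  shows "overlap (intv LL k 1 LL) (SS (XP j))"
proof -
  have j: "j < 3" using XP_mem assms(1) by simp
  have "1 \<le> xpv j k" "xpv j k < LL" using j assms(2) unfolding xpv_def LL_def CC_def by auto
  then have "overlap (star LL (xpv j)) (intv LL k 1 LL)" using star_intv_overlap[of 1 LL LL k "xpv j"] assms by auto
  then have "overlap (intv LL k 1 LL) (star LL (xpv j))" using overlap_sym by blast
  then show ?thesis by (simp add: SS_def vec_def)
qed

lemma c_VS_XP: assumes "XP j \<in> bverts V E"
  shows "AA VS (XP j) \<longleftrightarrow> overlap (SS VS) (SS (XP j))"
  using c_VSB_XP[OF assms, of 0] by (auto simp: bbase_def SS_def)

lemma c_VB_XP: assumes "XP j \<in> bverts V E"
  shows "AA VB (XP j) \<longleftrightarrow> overlap (SS VB) (SS (XP j))"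
  using c_VSB_XP[OF assms, of 1] by (auto simp: bbase_def SS_def)

lemma c_XP_XP: assumes "XP i \<in> bverts V E" "XP j \<in> bverts V E"
  shows "AA (XP i) (XP j) \<longleftrightarrow> overlap (SS (XP i)) (SS (XP j))"
proof -
  have ij: "i < 3" "j < 3" using XP_mem assms by auto
  have "(\<forall>k<3. xpv j k \<le> xpv i k) \<or> (\<forall>k<3. xpv i k \<le> xpv j k)"
    using ij unfolding xpv_def by auto
  then have "\<not> overlap (SS (XP i)) (SS (XP j))"
    using star_overlap[OF vec_le[OF assms(1)] vec_le[OF assms(2)]] SS_star[of "XP i"] SS_star[of "XP j"]
    by (auto simp: vec_def not_less[symmetric])
  moreover have "\<not> AA (XP i) (XP j)" by (auto simp: bbase_def is_V23_def)
  ultimately show ?thesis by blast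
qed

end



definition rank :: "'a bv \<Rightarrow> nat" where
  "rank x = (case x of VR _ _ \<Rightarrow> 0 | ER _ _ \<Rightarrow> 1 | Br _ _ \<Rightarrow> 1 | VS \<Rightarrow> 2 | VB \<Rightarrow> 3 | XP _ \<Rightarrow> 4)"

context LC begin

lemma main_ord: assumes x: "x \<in> bverts V E" and y: "y \<in> bverts V E" and ne: "x \<noteq> y" and r: "rank x \<le> rank y"
  shows "AA x y \<longleftrightarrow> overlap (SS x) (SS y)"
proof (cases x)
  case (VR i v)
  then have iv: "i < 6" "v \<in> V" using VR_mem x by auto
  show ?thesis
  proof (cases y)
    case (VR j w) then show ?thesis using c_vr_vr[OF iv(2,1)] VR_mem[of j w] y ne \<open>x = VR i v\<close> by auto
  next
    case (ER j e) then show ?thesis using c_vr_v23[OF iv(2,1) y] \<open>x = VR i v\<close> by (simp add: is_V23_def)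
  next
    case (Br j w) then show ?thesis using c_vr_v23[OF iv(2,1) y] \<open>x = VR i v\<close> by (simp add: is_V23_def)
  next
    case VS then show ?thesis using c_vr_VS[OF iv(2,1)] \<open>x = VR i v\<close> by simp
  next
    case VB then show ?thesis using c_vr_VB[OF iv(2,1)] \<open>x = VR i v\<close> by simp
  next
    case (XP j) then show ?thesis using c_vr_XP[OF iv(2,1)] y \<open>x = VR i v\<close> by simp
  qed
next
  case (ER i e)
  then have xv: "is_V23 x" by (simp add: is_V23_def)
  show ?thesis
  proof (cases y)
    case (VR j w) then show ?thesis using r \<open>x = ER i e\<close> by (simp add: rank_def)
  next
    case (ER j e') then show ?thesis using c_v23_v23[OF x xv y _ ne] by (simp add: is_V23_def)
  next
    case (Br j w) then show ?thesis using c_v23_v23[OF x xv y _ ne] by (simp add: is_V23_def)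
  next
    case VS then show ?thesis using c_v23_VS[OF x xv] by simp
  next
    case VB then show ?thesis using c_v23_VB[OF x xv] by simp
  next
    case (XP j) then show ?thesis using c_v23_XP[OF x xv] y by simp
  qed
next
  case (Br i v)
  then have xv: "is_V23 x" by (simp add: is_V23_def)
  show ?thesis
  proof (cases y)
    case (VR j w) then show ?thesis using r \<open>x = Br i v\<close> by (simp add: rank_def)
  next
    case (ER j e') then show ?thesis using c_v23_v23[OF x xv y _ ne] by (simp add: is_V23_def)
  next
    case (Br j w) then show ?thesis using c_v23_v23[OF x xv y _ ne] by (simp add: is_V23_def)
  next
    case VS then show ?thesis using c_v23_VS[OF x xv] by simp
  next
    case VB then show ?thesis using c_v23_VB[OF x xv] by simp
  next
    case (XP j) then show ?thesis using c_v23_XP[OF x xv] y by simp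
  qed
next
  case VS
  show ?thesis
  proof (cases y)
    case VB then show ?thesis using c_VS_VB VS by simp
  next
    case (XP j) then show ?thesis using c_VS_XP y VS by simp
  qed (use r ne VS in \<open>auto simp: rank_def\<close>)
next
  case VB
  show ?thesis
  proof (cases y)
    case (XP j) then show ?thesis using c_VB_XP y VB by simp
  qed (use r ne VB in \<open>auto simp: rank_def\<close>)
next
  case (XP i)
  show ?thesis
  proof (cases y)
    case (XP j) then show ?thesis using c_XP_XP x y \<open>x = XP i\<close> by simp
  qed (use r \<open>x = XP i\<close> in \<open>auto simp: rank_def\<close>)
qed

lemma main_all: assumes "x \<in> bverts V E" "y \<in> bverts V E" "x \<noteq> y"
  shows "badj V E x y \<longleftrightarrow> overlap (SS x) (SS y)"
proof -
  have "AA x y \<longleftrightarrow> overlap (SS x) (SS y)"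
  proof (cases "rank x \<le> rank y")
    case True then show ?thesis using main_ord assms by blast
  next
    case False
    then have "AA y x \<longleftrightarrow> overlap (SS y) (SS x)" using main_ord assms by simp
    then show ?thesis using overlap_sym by blast
  qed
  then show ?thesis using assms unfolding badj_def by blast
qed

lemma subtree_all: assumes "x \<in> bverts V E" shows "subtree (TN LL) (TE LL) (SS x)"
proof -
  have s1: "star LL a \<subseteq> TN LL" for a unfolding star_def by auto
  have s2: "intv LL k p q \<subseteq> TN LL" for k p q unfolding intv_def by auto
  have "LL \<ge> 1" unfolding LL_def by simp
  show ?thesis
  proof (cases x)
    case (VR i v)
    then have "i < 6" "v \<in> V" using VR_mem assms by auto
    then have "2 \<le> mid i v" "mid i v + 1 \<le> LL" "c v < 3" using mid_bd col by auto
    then show ?thesis using VR s2 intv_conn[of "mid i v" "mid i v + 1" LL "c v"] unfolding subtree_def SS_def by auto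
  next
    case VS then show ?thesis using s2 intv_conn[of 1 LL LL 0] \<open>LL \<ge> 1\<close> unfolding subtree_def SS_def by auto
  next
    case VB then show ?thesis using s2 intv_conn[of 1 LL LL 1] \<open>LL \<ge> 1\<close> unfolding subtree_def SS_def by auto
  qed (auto simp: subtree_def SS_def s1 star_conn)
qed

end



theorem lemma5:
  fixes V :: "'a set" and E :: "'a \<Rightarrow> 'a \<Rightarrow> bool"
  assumes "graph V E" and "three_connected V E" and "three_colourable V E"
  shows "\<exists>(TN :: nat set) TE (S :: 'a bv \<Rightarrow> nat set).
           tree TN TE \<and> card (leaves TN TE) = 3 \<and>
           (\<forall>x\<in>bverts V E. subtree TN TE (S x)) \<and>
           (\<forall>x\<in>bverts V E. \<forall>y\<in>bverts V E. x \<noteq> y \<longrightarrow>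
              (badj V E x y \<longleftrightarrow> overlap (S x) (S y)))"
proof -
  obtain c :: "'a \<Rightarrow> nat" where c: "\<forall>v\<in>V. c v < 3" "\<forall>u\<in>V. \<forall>v\<in>V. E u v \<longrightarrow> c u \<noteq> c v"
    using assms(3) unfolding three_colourable_def by blast
  have fin: "finite V" using assms(1) unfolding graph_def by blast
  obtain g where g: "bij_betw g V {0..<card V}" using ex_bij_betw_finite_nat[OF fin] by blast
  have gi: "inj_on g V" using g bij_betw_imp_inj_on by blast
  have gb: "\<forall>v\<in>V. g v < card V" using g bij_betwE by fastforce
  interpret LC V E c g using assms(1) c gi gb by unfold_locales auto
  have "2 \<le> LL" unfolding LL_def CC_def by simp
  show ?thesis
    using tree_T[of LL] leaves_T[OF \<open>2 \<le> LL\<close>] subtree_all main_all by blast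
qed


end
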